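(* Let $\mathbf C$ be a clone $\tau$-algebra. Then: (i) $\mathrm{Fi}\,\mathbf C$ is a subalgebra of $\mathbf C$; (ii) for each $k$, $\mathrm{Fi}_k\,\mathbf C$ is a subuniverse of the $\tau$-reduct $\mathbf C_\tau$, closed under all operations $q_n$ ($n\ge0$), and containing $\mathsf e_1,\dots,\mathsf e_k$; (iii) if $a\in\mathrm{Fi}_0\,\mathbf C$ and $b_1,\dots,b_n\in C$, then $q_n(a,b_1,\dots,b_n)=a$; (iv) if $a\in\mathrm{Fi}\,\mathbf C$, $n\ge\gamma(a)$ and $b_1,\dots,b_n\in\mathrm{Fi}_0\,\mathbf C$, then $q_n(a,b_1,\dots,b_n)\in\mathrm{Fi}_0\,\mathbf C$.
   Context: A clone $\tau$-algebra is an algebra $\mathbf C=(C,\sigma^{\mathbf C}\ (\sigma\in\tau),q_n^{\mathbf C}\ (n\ge0),\mathsf e_i^{\mathbf C}\ (i\ge1))$ with $\mathsf e_i$ nullary, $q_n$ of arity $n+1$, satisfying: (C1) $q_n(\mathsf e_i,x_1,\dots,x_n)=x_i$ ($1\le i\le n$); (C2) $q_n(\mathsf e_j,x_1,\dots,x_n)=\mathsf e_j$ ($j>n$); (C3) $q_n(x,\mathsf e_1,\dots,\mathsf e_n)=x$; (C4) $q_k(x,y_1,\dots,y_k)=q_n(x,y_1,\dots,y_k,\mathsf e_{k+1},\dots,\mathsf e_n)$ ($n>k$); (C5) $q_n(q_n(x,\mathbf y),\mathbf z)=q_n(x,q_n(y_1,\mathbf z),\dots,q_n(y_n,\mathbf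 z))$; (C6) $q_n(\sigma(x_1,\dots,x_k),\mathbf y)=\sigma(q_n(x_1,\mathbf y),\dots,q_n(x_k,\mathbf y))$ for $\sigma\in\tau$ of arity $k$. An element $a$ is independent of $\mathsf e_n$ if $q_n(a,\mathsf e_1,\dots,\mathsf e_{n-1},\mathsf e_{n+1})=a$, dependent otherwise; $\gamma(a)$ is $\omega$ if $a$ depends on infinitely many $\mathsf e_i$, $0$ if on none, otherwise the largest $i$ with $a$ dependent on $\mathsf e_i$. $\mathrm{Fi}_k\,\mathbf C=\{a\in C:\gamma(a)\le k\}$ and $\mathrm{Fi}\,\mathbf C=\bigcup_{k<\omega}\mathrm{Fi}_k\,\mathbf C$. *)

theory Defs
  imports Main "HOL-Library.Extended_Nat"
begin

text \<open>Operation symbols of tau are the elements of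
  type 'b, with arity ar; f s xs interprets symbol s on an argument list xs of length ar s.
  q n x ys is q_n(x, y_1, ..., y_n) with ys = [y_1,...,y_n] (length n);
  e i is the nullary constant e_i (only i >= 1 is meaningful).\<close>

definition clone_algebra ::
  "'a set \<Rightarrow> ('b \<Rightarrow> nat) \<Rightarrow> ('b \<Rightarrow> 'a list \<Rightarrow> 'a) \<Rightarrow> (nat \<Rightarrow> 'a \<Rightarrow> 'a list \<Rightarrow> 'a) \<Rightarrow> (nat \<Rightarrow> 'a) \<Rightarrow> bool"
where
  "clone_algebra C ar f q e \<longleftrightarrow>
     (\<forall>i\<ge>1. e i \<in> C) \<and>
     (\<forall>s xs. set xs \<subseteq> C \<longrightarrow> length xs = ar s \<longrightarrow> f s xs \<in> C) \<and>
     (\<forall>n x ys. x \<in> C \<longrightarrow> set ys \<subseteq> C \<longrightarrow> length ys = n \<longrightarrow> q n x ys \<in> C) \<and>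
     \<comment> \<open>(C1)\<close>
     (\<forall>n i xs. 1 \<le> i \<longrightarrow> i \<le> n \<longrightarrow> set xs \<subseteq> C \<longrightarrow> length xs = n \<longrightarrow>
        q n (e i) xs = xs ! (i - 1)) \<and>
     \<comment> \<open>(C2)\<close>
     (\<forall>n j xs. j > n \<longrightarrow> set xs \<subseteq> C \<longrightarrow> length xs = n \<longrightarrow> q n (e j) xs = e j) \<and>
     \<comment> \<open>(C3)\<close>
     (\<forall>n x. x \<in> C \<longrightarrow> q n x (map e [1..<Suc n]) = x) \<and>
     \<comment> \<open>(C4)\<close>
     (\<forall>n k x ys. n > k \<longrightarrow> x \<in> C \<longrightarrow> set ys \<subseteq> C \<longrightarrow> length ys = k \<longrightarrow>
        q k x ys = q n x (ys @ map e [Suc k..<Suc n])) \<and>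
     \<comment> \<open>(C5)\<close>
     (\<forall>n x ys zs. x \<in> C \<longrightarrow> set ys \<subseteq> C \<longrightarrow> set zs \<subseteq> C \<longrightarrow> length ys = n \<longrightarrow> length zs = n \<longrightarrow>
        q n (q n x ys) zs = q n x (map (\<lambda>y. q n y zs) ys)) \<and>
     \<comment> \<open>(C6)\<close>
     (\<forall>n s xs ys. set xs \<subseteq> C \<longrightarrow> set ys \<subseteq> C \<longrightarrow> length xs = ar s \<longrightarrow> length ys = n \<longrightarrow>
        q n (f s xs) ys = f s (map (\<lambda>x. q n x ys) xs))"

definition independent :: "(nat \<Rightarrow> 'a \<Rightarrow> 'a list \<Rightarrow> 'a) \<Rightarrow> (nat \<Rightarrow> 'a) \<Rightarrow> 'a \<Rightarrow> nat \<Rightarrow> bool" where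
  "independent q e a n \<longleftrightarrow> q n a (map e [1..<n] @ [e (Suc n)]) = a"

definition dep_set :: "(nat \<Rightarrow> 'a \<Rightarrow> 'a list \<Rightarrow> 'a) \<Rightarrow> (nat \<Rightarrow> 'a) \<Rightarrow> 'a \<Rightarrow> nat set" where
  "dep_set q e a = {i. 1 \<le> i \<and> \<not> independent q e a i}"

definition gamma :: "(nat \<Rightarrow> 'a \<Rightarrow> 'a list \<Rightarrow> 'a) \<Rightarrow> (nat \<Rightarrow> 'a) \<Rightarrow> 'a \<Rightarrow> enat" where
  "gamma q e a = (if infinite (dep_set q e a) then \<infinity>
                  else if dep_set q e a = {} then 0 else enat (Max (dep_set q e a)))"

definition Fi_k :: "'a set \<Rightarrow> (nat \<Rightarrow> 'a \<Rightarrow> 'a list \<Rightarrow> 'a) \<Rightarrow> (nat \<Rightarrow> 'a) \<Rightarrow> nat \<Rightarrow> 'a set" where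
  "Fi_k C q e k = {a \<in> C. gamma q e a \<le> enat k}"

definition Fi :: "'a set \<Rightarrow> (nat \<Rightarrow> 'a \<Rightarrow> 'a list \<Rightarrow> 'a) \<Rightarrow> (nat \<Rightarrow> 'a) \<Rightarrow> 'a set" where
  "Fi C q e = (\<Union>k. Fi_k C q e k)"

definition tau_subuniverse :: "'a set \<Rightarrow> ('b \<Rightarrow> nat) \<Rightarrow> ('b \<Rightarrow> 'a list \<Rightarrow> 'a) \<Rightarrow> 'a set \<Rightarrow> bool" where
  "tau_subuniverse C ar f S \<longleftrightarrow> S \<subseteq> C \<and>
     (\<forall>s xs. set xs \<subseteq> S \<longrightarrow> length xs = ar s \<longrightarrow> f s xs \<in> S)"

definition q_closed :: "(nat \<Rightarrow> 'a \<Rightarrow> 'a list \<Rightarrow> 'a) \<Rightarrow> 'a set \<Rightarrow> bool" where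
  "q_closed q S \<longleftrightarrow> (\<forall>n x ys. x \<in> S \<longrightarrow> set ys \<subseteq> S \<longrightarrow> length ys = n \<longrightarrow> q n x ys \<in> S)"

definition subalgebra ::
  "'a set \<Rightarrow> ('b \<Rightarrow> nat) \<Rightarrow> ('b \<Rightarrow> 'a list \<Rightarrow> 'a) \<Rightarrow> (nat \<Rightarrow> 'a \<Rightarrow> 'a list \<Rightarrow> 'a) \<Rightarrow> (nat \<Rightarrow> 'a) \<Rightarrow> 'a set \<Rightarrow> bool"
where
  "subalgebra C ar f q e S \<longleftrightarrow> tau_subuniverse C ar f S \<and> q_closed q S \<and> (\<forall>i\<ge>1. e i \<in> S)"

end

theory Submission
  imports Defs
begin

context
  fixes C :: "'a set" and ar :: "'b \<Rightarrow> nat" and f :: "'b \<Rightarrow> 'a list \<Rightarrow> 'a"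
    and q :: "nat \<Rightarrow> 'a \<Rightarrow> 'a list \<Rightarrow> 'a" and e :: "nat \<Rightarrow> 'a"
  assumes cl: "clone_algebra C ar f q e"
begin

lemma cl_e: "1 \<le> i \<Longrightarrow> e i \<in> C"
  using cl[unfolded clone_algebra_def,  THEN conjunct1] by blast
lemma cl_f: "set xs \<subseteq> C \<Longrightarrow> length xs = ar s \<Longrightarrow> f s xs \<in> C"
  using cl[unfolded clone_algebra_def, THEN conjunct2, THEN conjunct1] by blast
lemma cl_q: "x \<in> C \<Longrightarrow> set ys \<subseteq> C \<Longrightarrow> length ys = n \<Longrightarrow> q n x ys \<in> C"
  using cl[unfolded clone_algebra_def, THEN conjunct2,THEN conjunct2, THEN conjunct1] by blast
lemma cl_C1: "1 \<le> i \<Longrightarrow> i \<le> n \<Longrightarrow> set xs \<subseteq> C \<Longrightarrow> length xs = n \<Longrightarrow> q n (e i) xs = xs ! (i - 1)"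
  using cl[unfolded clone_algebra_def, THEN conjunct2,THEN conjunct2,THEN conjunct2, THEN conjunct1] by blast
lemma cl_C2: "n < j \<Longrightarrow> set xs \<subseteq> C \<Longrightarrow> length xs = n \<Longrightarrow> q n (e j) xs = e j"
  using cl[unfolded clone_algebra_def, THEN conjunct2,THEN conjunct2,THEN conjunct2,THEN conjunct2, THEN conjunct1] by blast
lemma cl_C3: "x \<in> C \<Longrightarrow> q n x (map e [1..<Suc n]) = x"
  using cl[unfolded clone_algebra_def, THEN conjunct2,THEN conjunct2,THEN conjunct2,THEN conjunct2,THEN conjunct2, THEN conjunct1] by blast
lemma cl_C4: "k < n \<Longrightarrow> x \<in> C \<Longrightarrow> set ys \<subseteq> C \<Longrightarrow> length ys = k \<Longrightarrow>
   q k x ys = q n x (ys @ map e [Suc k..<Suc n])"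
  using cl[unfolded clone_algebra_def, THEN conjunct2,THEN conjunct2,THEN conjunct2,THEN conjunct2,THEN conjunct2,THEN conjunct2, THEN conjunct1] by blast
lemma cl_C5: "x \<in> C \<Longrightarrow> set ys \<subseteq> C \<Longrightarrow> set zs \<subseteq> C \<Longrightarrow> length ys = n \<Longrightarrow> length zs = n \<Longrightarrow>
        q n (q n x ys) zs = q n x (map (\<lambda>y. q n y zs) ys)"
  using cl[unfolded clone_algebra_def, THEN conjunct2,THEN conjunct2,THEN conjunct2,THEN conjunct2,THEN conjunct2,THEN conjunct2,THEN conjunct2, THEN conjunct1] by blast
lemma cl_C6: "set xs \<subseteq> C \<Longrightarrow> set ys \<subseteq> C \<Longrightarrow> length xs = ar s \<Longrightarrow> length ys = n \<Longrightarrow>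
        q n (f s xs) ys = f s (map (\<lambda>x. q n x ys) xs)"
  using cl[unfolded clone_algebra_def, THEN conjunct2,THEN conjunct2,THEN conjunct2,THEN conjunct2,THEN conjunct2,THEN conjunct2,THEN conjunct2,THEN conjunct2] by blast

lemma cl_map_e: "1 \<le> a \<Longrightarrow> set (map e [a..<b]) \<subseteq> C"
  using cl_e by auto

lemma cl_C4': "k \<le> n \<Longrightarrow> x \<in> C \<Longrightarrow> set ys \<subseteq> C \<Longrightarrow> length ys = k \<Longrightarrow>
   q k x ys = q n x (ys @ map e [Suc k..<Suc n])"
  using cl_C4[of k n x ys] by (cases "k = n") auto

lemma map_proj: "set xs \<subseteq> C \<Longrightarrow> length xs = n \<Longrightarrow> m \<le> n \<Longrightarrow>
   map (\<lambda>z. q n z xs) (map e [1..<Suc m]) = take m xs"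
proof (rule nth_equalityI)
  assume a: "set xs \<subseteq> C" "length xs = n" "m \<le> n"
  show "length (map (\<lambda>z. q n z xs) (map e [1..<Suc m])) = length (take m xs)"
    using a by simp
  fix j assume "j < length (map (\<lambda>z. q n z xs) (map e [1..<Suc m]))"
  then have j: "j < m" by (simp del: upt_Suc)
  have "map (\<lambda>z. q n z xs) (map e [1..<Suc m]) ! j = q n (e (Suc j)) xs"
    using j by (simp add: nth_upt del: upt_Suc)
  also have "\<dots> = xs ! j" using cl_C1[of "Suc j" n xs] a j by simp
  finally show "map (\<lambda>z. q n z xs) (map e [1..<Suc m]) ! j = take m xs ! j"
    using j by simp
qed

lemma L:
  assumes a: "a \<in> C" and ind: "\<forall>i>k. independent q e a i"
  shows "k \<le> N \<Longrightarrow> set ys \<subseteq> C \<Longrightarrow> length ys = N \<Longrightarrow> q N a ys = q k a (take k ys)"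
proof (induction N arbitrary: ys)
  case 0 then show ?case by simp
next
  case (Suc N)
  show ?case
  proof (cases "k = Suc N")
    case True then show ?thesis using Suc.prems by simp
  next
    case False
    hence kN: "k \<le> N" using Suc.prems by simp
    obtain zs y where ys: "ys = zs @ [y]" using Suc.prems(3)
      by (metis length_Suc_conv_rev)
    have zs: "set zs \<subseteq> C" "length zs = N" "y \<in> C" using Suc.prems ys by auto
    let ?ws = "map e [1..<Suc N] @ [e (Suc (Suc N))]"
    have wsC: "set ?ws \<subseteq> C" using cl_map_e cl_e by auto
    have indN: "q (Suc N) a ?ws = a" using ind[rule_format, of "Suc N"] kN unfolding independent_def by (simp del: upt_Suc)
    have gen: "q (Suc N) a (zs @ [w]) = q (Suc N) a (zs @ [e (Suc (Suc N))])" if w: "w \<in> C" for w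
    proof -
      have wC: "set (zs @ [w]) \<subseteq> C" using zs w by auto
      have "q (Suc N) a (zs @ [w]) = q (Suc N) (q (Suc N) a ?ws) (zs @ [w])" using indN by simp
      also have "\<dots> = q (Suc N) a (map (\<lambda>z. q (Suc N) z (zs @ [w])) ?ws)"
        using cl_C5[OF a wsC wC] zs by simp
      also have "map (\<lambda>z. q (Suc N) z (zs @ [w])) ?ws = zs @ [e (Suc (Suc N))]"
        using map_proj[OF wC, of "Suc N" N] cl_C2[of "Suc N" "Suc (Suc N)" "zs @ [w]"] wC zs
        by simp
      finally show ?thesis .
    qed
    have "q (Suc N) a ys = q (Suc N) a (zs @ [e (Suc N)])"
      using gen[of y] gen[of "e (Suc N)"] cl_e zs ys by simp
    also have "\<dots> = q N a zs" using cl_C4[of N "Suc N" a zs] a zs by simp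
    also have "\<dots> = q k a (take k zs)" using Suc.IH[of zs] kN zs by simp
    finally show ?thesis using ys kN zs by simp
  qed
qed

lemma L2:
  assumes "a \<in> C" "\<forall>i>k. independent q e a i" "k \<le> N" "set ys \<subseteq> C" "length ys = N"
    "set ys2 \<subseteq> C" "length ys2 = N" "take k ys = take k ys2"
  shows "q N a ys = q N a ys2"
  using L[OF assms(1,2), of N ys] L[OF assms(1,2), of N ys2] assms by simp

lemma gamma_le: "gamma q e a \<le> enat k \<longleftrightarrow> (\<forall>i>k. independent q e a i)"
proof -
  let ?D = "dep_set q e a"
  show ?thesis
  proof (cases "finite ?D")
    case False
    have "\<not> ?D \<subseteq> {..k}" using False finite_subset by blast
    then obtain i where "i \<in> ?D" "i > k" by force
    then show ?thesis using False unfolding gamma_def dep_set_def by auto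
  next
    case True
    show ?thesis
    proof (cases "?D = {}")
      case True
      then show ?thesis using \<open>finite ?D\<close> unfolding gamma_def dep_set_def by auto
    next
      case False
      have "gamma q e a \<le> enat k \<longleftrightarrow> (\<forall>i\<in>?D. i \<le> k)"
        using True False unfolding gamma_def by (simp add: Max_le_iff)
      also have "\<dots> \<longleftrightarrow> (\<forall>i>k. independent q e a i)"
      proof (intro iffI allI impI ballI)
        fix i assume H: "\<forall>i\<in>?D. i \<le> k" "k < i"
        show "independent q e a i"
        proof (rule ccontr)
          assume "\<not> independent q e a i"
          then have "i \<in> ?D" using H(2) unfolding dep_set_def by auto
          then show False using H by auto
        qed
      next
        fix i assume H: "\<forall>i>k. independent q e a i" "i \<in> ?D"
        have "\<not> independent q e a i" using H(2) unfolding dep_set_def by simp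
        then show "i \<le> k" using H(1) not_le by blast
      qed
      finally show ?thesis .
    qed
  qed
qed

lemma Fi_k_char: "Fi_k C q e k = {a \<in> C. \<forall>i>k. independent q e a i}"
  unfolding Fi_k_def using gamma_le by auto

lemma Q:
  assumes x: "x \<in> C" and xi: "\<forall>j>m. independent q e x j"
    and ys: "set ys \<subseteq> C" and ysi: "\<forall>y\<in>set ys. \<forall>j>k. independent q e y j" and n: "length ys = n"
    and mk: "m \<le> max n k" and ik: "k < i"
  shows "independent q e (q n x ys) i"
proof -
  define M where "M = max n i"
  define ys' where "ys' = ys @ map e [Suc n..<Suc M]"
  define ws where "ws = map e [1..<i] @ [e (Suc i)]"
  define ws' where "ws' = ws @ map e [Suc i..<Suc M]"
  have ys'C: "set ys' \<subseteq> C" "length ys' = M" unfolding ys'_def using ys n cl_map_e[of "Suc n" "Suc M"] M_def by (auto simp del: upt_Suc)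
  have wsC: "set ws \<subseteq> C" "length ws = i" unfolding ws_def using cl_map_e cl_e ik by auto
  have ws'C: "set ws' \<subseteq> C" "length ws' = M" unfolding ws'_def using wsC cl_map_e[of "Suc i" "Suc M"] M_def by (auto simp del: upt_Suc)
  have nM: "n \<le> M" and iM: "i \<le> M" unfolding M_def by auto
  have c: "q n x ys = q M x ys'" unfolding ys'_def by (rule cl_C4'[OF nM x ys n])
  have cC: "q n x ys \<in> C" using cl_q x ys n by simp
  have fix_y: "q M y ws' = y" if y: "y \<in> set ys" for y
  proof -
    have yC: "y \<in> C" using y ys by auto
    have "q M y ws' = q i y ws" unfolding ws'_def by (rule sym, rule cl_C4'[OF iM yC wsC])
    also have "\<dots> = y" using ysi y ik unfolding independent_def ws_def by auto
    finally show ?thesis .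
  qed
  have tk: "take m (map (\<lambda>z. q M z ws') ys') = take m ys'"
  proof (rule nth_equalityI)
    show "length (take m (map (\<lambda>z. q M z ws') ys')) = length (take m ys')" by simp
    fix j assume "j < length (take m (map (\<lambda>z. q M z ws') ys'))"
    then have j: "j < m" "j < M" using ys'C by auto
    show "take m (map (\<lambda>z. q M z ws') ys') ! j = take m ys' ! j"
    proof (cases "j < n")
      case True
      then have "ys' ! j = ys ! j" unfolding ys'_def using n by (simp add: nth_append)
      then show ?thesis using j True fix_y[of "ys ! j"] n ys'C by simp
    next
      case False
      have jM: "j - n < Suc M - Suc n" using j False by linarith
      have e1: "ys' ! j = e (Suc j)" unfolding ys'_def using n False jM
        by (simp add: nth_append nth_upt del: upt_Suc)
      have ji: "Suc j < i" using False j mk ik by auto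
      have "ws' ! j = e (Suc j)" unfolding ws'_def ws_def using ji
        by (auto simp add: nth_append nth_upt del: upt_Suc)
      moreover have "q M (e (Suc j)) ws' = ws' ! j" using cl_C1[of "Suc j" M ws'] ws'C j by simp
      ultimately show ?thesis using j e1 ys'C by simp
    qed
  qed
  have mM: "m \<le> M" using mk ik M_def by auto
  have mapC: "set (map (\<lambda>z. q M z ws') ys') \<subseteq> C" using ys'C ws'C cl_q by auto
  have "q i (q n x ys) ws = q M (q n x ys) ws'"
    unfolding ws'_def by (rule cl_C4'[OF iM cC wsC])
  also have "\<dots> = q M (q M x ys') ws'" using c by simp
  also have "\<dots> = q M x (map (\<lambda>z. q M z ws') ys')" using cl_C5[OF x ys'C(1) ws'C(1)] ys'C ws'C by simp
  also have "\<dots> = q M x ys'" using L2[OF x xi mM mapC _ ys'C tk] ys'C by simp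
  also have "\<dots> = q n x ys" using c by simp
  finally show ?thesis unfolding independent_def ws_def .
qed

lemma f_indep:
  assumes "set xs \<subseteq> C" "length xs = ar s" "\<forall>x\<in>set xs. independent q e x i" "1 \<le> i"
  shows "independent q e (f s xs) i"
proof -
  let ?ws = "map e [1..<i] @ [e (Suc i)]"
  have wsC: "set ?ws \<subseteq> C" using cl_map_e cl_e by auto
  have len: "length ?ws = i" using assms(4) by simp
  have "q i (f s xs) ?ws = f s (map (\<lambda>x. q i x ?ws) xs)" by (rule cl_C6[OF assms(1) wsC assms(2) len])
  also have "map (\<lambda>x. q i x ?ws) xs = xs" using assms(3) unfolding independent_def
    by (simp add: map_idI)
  finally show ?thesis unfolding independent_def .
qed

lemma Fi_k_mono: "k \<le> k' \<Longrightarrow> Fi_k C q e k \<subseteq> Fi_k C q e k'"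
  unfolding Fi_k_char by auto

lemma Fi_list: "set xs \<subseteq> Fi C q e \<Longrightarrow> \<exists>k. set xs \<subseteq> Fi_k C q e k"
proof (induction xs)
  case Nil then show ?case by simp
next
  case (Cons x xs)
  then obtain k where k: "set xs \<subseteq> Fi_k C q e k" by auto
  obtain k' where k': "x \<in> Fi_k C q e k'" using Cons.prems unfolding Fi_def by auto
  have "set (x # xs) \<subseteq> Fi_k C q e (max k k')"
    using k k' Fi_k_mono[of k "max k k'"] Fi_k_mono[of k' "max k k'"] by auto
  then show ?case by blast
qed

lemma Fi_k_tau: "tau_subuniverse C ar f (Fi_k C q e k)"
  unfolding tau_subuniverse_def
proof (intro conjI allI impI)
  show "Fi_k C q e k \<subseteq> C" unfolding Fi_k_char by auto
  fix s xs assume a: "set xs \<subseteq> Fi_k C q e k" "length xs = ar s"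
  have xsC: "set xs \<subseteq> C" using a unfolding Fi_k_char by auto
  show "f s xs \<in> Fi_k C q e k" unfolding Fi_k_char
  proof (intro CollectI conjI allI impI)
    show "f s xs \<in> C" using cl_f[OF xsC a(2)] .
    fix i assume "k < i"
    then have "1 \<le> i" by simp
    show "independent q e (f s xs) i"
      using f_indep[OF xsC a(2) _ \<open>1 \<le> i\<close>] a(1) \<open>k < i\<close> unfolding Fi_k_char by auto
  qed
qed

lemma Fi_k_q: "q_closed q (Fi_k C q e k)"
  unfolding q_closed_def
proof (intro allI impI)
  fix n x ys assume a: "x \<in> Fi_k C q e k" "set ys \<subseteq> Fi_k C q e k" "length ys = n"
  have xsC: "set ys \<subseteq> C" "x \<in> C" using a unfolding Fi_k_char by auto
  show "q n x ys \<in> Fi_k C q e k" unfolding Fi_k_char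
    using cl_q[OF xsC(2) xsC(1) a(3)] Q[OF xsC(2) _ xsC(1) _ a(3), of k k] a unfolding Fi_k_char by auto
qed

lemma Fi_k_e: "1 \<le> i \<Longrightarrow> i \<le> k \<Longrightarrow> e i \<in> Fi_k C q e k"
  unfolding Fi_k_char independent_def
proof (intro CollectI conjI allI impI)
  fix j assume a: "1 \<le> i" "i \<le> k" "k < j"
  have wsC: "set (map e [1..<j] @ [e (Suc j)]) \<subseteq> C" using cl_map_e cl_e by auto
  have ij: "i - 1 < j - 1" using a by linarith
  have "q j (e i) (map e [1..<j] @ [e (Suc j)]) = (map e [1..<j] @ [e (Suc j)]) ! (i - 1)"
    using cl_C1[OF _ _ wsC] a by simp
  also have "\<dots> = e i" using a ij by (simp add: nth_append nth_upt del: upt_Suc)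
  finally show "q j (e i) (map e [1..<j] @ [e (Suc j)]) = e i" .
qed (use cl_e in auto)

end

theorem proposition4p9:
  fixes C :: "'a set" and ar :: "'b \<Rightarrow> nat" and f :: "'b \<Rightarrow> 'a list \<Rightarrow> 'a"
    and q :: "nat \<Rightarrow> 'a \<Rightarrow> 'a list \<Rightarrow> 'a" and e :: "nat \<Rightarrow> 'a"
  assumes "clone_algebra C ar f q e"
  shows "subalgebra C ar f q e (Fi C q e)
    \<and> (\<forall>k. tau_subuniverse C ar f (Fi_k C q e k) \<and> q_closed q (Fi_k C q e k)
              \<and> (\<forall>i. 1 \<le> i \<and> i \<le> k \<longrightarrow> e i \<in> Fi_k C q e k))
    \<and> (\<forall>a n bs. a \<in> Fi_k C q e 0 \<longrightarrow> set bs \<subseteq> C \<longrightarrow> length bs = n \<longrightarrow> q n a bs = a)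
    \<and> (\<forall>a n bs. a \<in> Fi C q e \<longrightarrow> gamma q e a \<le> enat n \<longrightarrow> set bs \<subseteq> Fi_k C q e 0
              \<longrightarrow> length bs = n \<longrightarrow> q n a bs \<in> Fi_k C q e 0)"
proof (intro conjI allI impI)
  note cl = assms
  show "subalgebra C ar f q e (Fi C q e)"
    unfolding subalgebra_def tau_subuniverse_def q_closed_def
  proof (intro conjI allI impI)
    show "Fi C q e \<subseteq> C" unfolding Fi_def Fi_k_char[OF cl] by auto
    fix i :: nat assume "1 \<le> i"
    then show "e i \<in> Fi C q e" unfolding Fi_def using Fi_k_e[OF cl, of i i] by auto
  next
    fix s xs assume a: "set xs \<subseteq> Fi C q e" "length xs = ar s"
    obtain k where "set xs \<subseteq> Fi_k C q e k" using Fi_list[OF cl a(1)] by blast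
    then have "f s xs \<in> Fi_k C q e k" using Fi_k_tau[OF cl, of k] a(2)
      unfolding tau_subuniverse_def by blast
    then show "f s xs \<in> Fi C q e" unfolding Fi_def by blast
  next
    fix n x ys assume a: "x \<in> Fi C q e" "set ys \<subseteq> Fi C q e" "length ys = n"
    obtain k where "set (x # ys) \<subseteq> Fi_k C q e k" using Fi_list[OF cl, of "x # ys"] a by auto
    then have "q n x ys \<in> Fi_k C q e k" using Fi_k_q[OF cl, of k] a(3)
      unfolding q_closed_def by auto
    then show "q n x ys \<in> Fi C q e" unfolding Fi_def by blast
  qed
next
  fix k show "tau_subuniverse C ar f (Fi_k C q e k)" using Fi_k_tau[OF assms] .
next
  fix k show "q_closed q (Fi_k C q e k)" using Fi_k_q[OF assms] .
next
  fix k i :: nat assume "1 \<le> i \<and> i \<le> k"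
  then show "e i \<in> Fi_k C q e k" using Fi_k_e[OF assms] by auto
next
  fix a n bs assume a: "a \<in> Fi_k C q e 0" "set bs \<subseteq> C" "length bs = n"
  have aC: "a \<in> C" "\<forall>i>0. independent q e a i" using a unfolding Fi_k_char[OF assms] by auto
  have "q n a bs = q 0 a (take 0 bs)" using L[OF assms aC, of n bs] a by simp
  also have "\<dots> = a" using cl_C3[OF assms aC(1), of 0] by simp
  finally show "q n a bs = a" .
next
  fix a n bs assume a: "a \<in> Fi C q e" "gamma q e a \<le> enat n" "set bs \<subseteq> Fi_k C q e 0" "length bs = n"
  have aC: "a \<in> C" using a unfolding Fi_def Fi_k_char[OF assms] by auto
  have ai: "\<forall>j>n. independent q e a j" using a(2) gamma_le[OF assms] by auto
  have bC: "set bs \<subseteq> C" "\<forall>y\<in>set bs. \<forall>j>0. independent q e y j"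
    using a(3) unfolding Fi_k_char[OF assms] by auto
  show "q n a bs \<in> Fi_k C q e 0" unfolding Fi_k_char[OF assms]
    using cl_q[OF assms aC bC(1) a(4)] Q[OF assms aC ai bC(1) bC(2) a(4), of ] by auto
qed

end
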